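(* Let $\mathcal B$ be finite, $\eta>0$, $Q,\tilde Q\in\mathbb R^{\mathcal B}$, $V=\eta^{-1}\log\sum_be^{\eta Q(b)}$, $\tilde V=\eta^{-1}\log\sum_be^{\eta\tilde Q(b)}$, $A=Q-V\mathbf 1$, $\tilde A=\tilde Q-\tilde V\mathbf 1$, $\nu=\exp(\eta A)$, $\tilde\nu=\exp(\eta\tilde A)$, and let $B_A>0$ with $\max\{\|A\|_\infty,\|\tilde A\|_\infty\}\le B_A$. Then $$D_{\rm H}^2(\nu,\tilde\nu)\ge\frac{\eta^2}{8(1+\eta B_A)^2}\,\langle\nu,(\tilde A-A)^2\rangle_{\mathcal B}.$$
   Context: $D_{\rm H}^2(p,q)=\frac12\sum_b(\sqrt{p(b)}-\sqrt{q(b)})^2$; $\langle f,g\rangle_{\mathcal B}=\sum_bf(b)g(b)$; squares are entrywise. *)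

theory Defs
  imports "HOL-Analysis.Analysis"
begin

definition hellinger_sq :: "'b set \<Rightarrow> ('b \<Rightarrow> real) \<Rightarrow> ('b \<Rightarrow> real) \<Rightarrow> real" where
  "hellinger_sq B p q = (1/2) * (\<Sum>b\<in>B. (sqrt (p b) - sqrt (q b))^2)"

definition lse_value :: "'b set \<Rightarrow> real \<Rightarrow> ('b \<Rightarrow> real) \<Rightarrow> real" where
  "lse_value B \<eta> Q = ln (\<Sum>b\<in>B. exp (\<eta> * Q b)) / \<eta>"

end

theory Submission
  imports Defs
begin

lemma key_ineq:
  fixes x M :: real
  assumes "M \<ge> 0" "x \<ge> -M"
  shows "(1 - exp x)^2 \<ge> x^2 / (1+M)^2"
proof (cases "x \<ge> 0")
  case True
  have "exp x - 1 \<ge> x" using exp_ge_add_one_self[of x] by linarith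
  moreover have "x / (1+M) \<le> x" using True assms by (simp add: divide_simps) (simp add: algebra_simps)
  ultimately have "x/(1+M) \<le> exp x - 1" "0 \<le> x/(1+M)" using True assms by auto
  hence "(x/(1+M))^2 \<le> (exp x - 1)^2" by (rule power_mono)
  thus ?thesis by (simp add: power_divide power2_commute)
next
  case False
  define t where "t = -x"
  have t: "0 < t" "t \<le> M" using False assms t_def by auto
  have "exp t \<ge> 1 + t" by (rule exp_ge_add_one_self)
  hence "exp t * (1+M-t) \<ge> (1+t)*(1+M-t)" using t by (intro mult_right_mono) auto
  moreover have "(1+t)*(1+M-t) \<ge> 1+M"
  proof -
    have "t*(M-t) \<ge> 0" using t by simp
    thus ?thesis by (simp add: algebra_simps)
  qed
  ultimately have h: "exp t * (1+M-t) \<ge> 1+M" by linarith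
  have ex: "exp x = 1 / exp t" using t_def by (simp add: exp_minus field_simps)
  have "exp x \<le> 1 - t/(1+M)"
    unfolding ex using h t assms by (simp add: divide_simps) (smt (verit) mult.commute)
  hence "t/(1+M) \<le> 1 - exp x" "0 \<le> t/(1+M)" using t assms by auto
  hence "(t/(1+M))^2 \<le> (1 - exp x)^2" by (rule power_mono)
  thus ?thesis using t_def by (simp add: power_divide)
qed

lemma sqrt_exp: "sqrt (exp (a::real)) = exp (a/2)"
proof -
  have "exp a = (exp (a/2))^2" by (simp add: power2_eq_square flip: exp_add)
  thus ?thesis by simp
qed

lemma term_ineq:
  fixes a d \<eta> M :: real
  assumes "M \<ge> 0" "\<bar>\<eta> * d\<bar> \<le> 2*M"
  shows "(sqrt (exp a) - sqrt (exp (a + \<eta> * d)))^2 \<ge> \<eta>^2 / (4*(1+M)^2) * (exp a * d^2)"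
proof -
  have k: "(1 - exp (\<eta>*d/2))^2 \<ge> (\<eta>*d/2)^2 / (1+M)^2"
    using assms by (intro key_ineq) auto
  have "(sqrt (exp a) - sqrt (exp (a + \<eta> * d)))^2 = exp a * (1 - exp (\<eta>*d/2))^2"
    by (simp add: sqrt_exp power2_eq_square algebra_simps add_divide_distrib flip: exp_add)
  also have "\<dots> \<ge> exp a * ((\<eta>*d/2)^2 / (1+M)^2)"
    using k by (intro mult_left_mono) auto
  finally show ?thesis by (simp add: power2_eq_square field_simps)
qed

theorem mainTheorem11:
  fixes B :: "'b set" and \<eta> BA :: real and Q Qt :: "'b \<Rightarrow> real"
  assumes "finite B" and "B \<noteq> {}"
    and "\<eta> > 0" and "BA > 0"
    and "\<forall>b\<in>B. \<bar>Q b - lse_value B \<eta> Q\<bar> \<le> BA"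
    and "\<forall>b\<in>B. \<bar>Qt b - lse_value B \<eta> Qt\<bar> \<le> BA"
  shows "hellinger_sq B (\<lambda>b. exp (\<eta> * (Q b - lse_value B \<eta> Q)))
                        (\<lambda>b. exp (\<eta> * (Qt b - lse_value B \<eta> Qt)))
         \<ge> \<eta>^2 / (8 * (1 + \<eta> * BA)^2) *
           (\<Sum>b\<in>B. exp (\<eta> * (Q b - lse_value B \<eta> Q)) *
                    ((Qt b - lse_value B \<eta> Qt) - (Q b - lse_value B \<eta> Q))^2)"
proof -
  define V where "V = lse_value B \<eta> Q"
  define Vt where "Vt = lse_value B \<eta> Qt"
  define M where "M = \<eta> * BA"
  have M0: "M \<ge> 0" using assms unfolding M_def by simp
  have "\<eta>^2 / (8 * (1 + \<eta> * BA)^2) *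
           (\<Sum>b\<in>B. exp (\<eta> * (Q b - V)) * ((Qt b - Vt) - (Q b - V))^2)
      = (1/2) * (\<Sum>b\<in>B. \<eta>^2 / (4*(1+M)^2) * (exp (\<eta> * (Q b - V)) * ((Qt b - Vt) - (Q b - V))^2))"
    by (simp add: sum_distrib_left M_def)
  also have "\<dots> \<le> (1/2) * (\<Sum>b\<in>B. (sqrt (exp (\<eta> * (Q b - V))) - sqrt (exp (\<eta> * (Qt b - Vt))))^2)"
  proof (intro mult_left_mono sum_mono)
    fix b assume b: "b \<in> B"
    have "\<bar>(Qt b - Vt) - (Q b - V)\<bar> \<le> 2*BA" using assms(5,6) b unfolding V_def Vt_def by force
    hence "\<bar>\<eta> * ((Qt b - Vt) - (Q b - V))\<bar> \<le> 2*M"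
      using assms(3) unfolding M_def by (simp add: abs_mult)
    from term_ineq[OF M0 this, of "\<eta> * (Q b - V)"]
    show "\<eta>^2 / (4*(1+M)^2) * (exp (\<eta> * (Q b - V)) * ((Qt b - Vt) - (Q b - V))^2)
      \<le> (sqrt (exp (\<eta> * (Q b - V))) - sqrt (exp (\<eta> * (Qt b - Vt))))^2"
      by (simp add: algebra_simps)
  qed simp
  finally show ?thesis unfolding hellinger_sq_def V_def Vt_def .
qed

end
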